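(* For $i\ge1$ let $x_i=(1+\alpha)\Gamma(2+\alpha)\frac{\Gamma(i)}{\Gamma(2+\alpha+i)}$, $\alpha=k/\lambda$, and set $x_0=0$. Then for all $i,j\ge1$, as $n\to\infty$, $$x^{(n)}_i=x_i+O(n^{-1}),\qquad (nk)^{-2}\mathbf E X^{(n)}_iX^{(n)}_j=x_ix_j+O(n^{-1}).$$ Moreover, for all $i,j\ge1$ the finite limits $h_{i,j}=\lim_{n\to\infty}h^{(n)}_{i,j}$ exist; they are symmetric ($h_{i,j}=h_{j,i}$) and, with the convention $h_{i,j}=0$ when $\min\{i,j\}=0$, satisfy $$h_{i,i}=\frac{2(i-1)h_{i,i-1}+ix_i+(i-1)x_{i-1}}{2i+1+\alpha},\qquad h_{i,i+1}=\frac{(i-1)h_{i-1,i+1}+ih_{i,i}-ix_i}{2i+2+\alpha},$$ $$h_{i,r}=\frac{(i-1)h_{i-1,r}+(r-1)h_{i,r-1}}{i+r+1+\alpha},\qquad r\ge i+2.$$ In particular, for all $i,j\ge1$, $$(nk)^{-2}\mathbf E X^{(n)}_iX^{(n)}_j=x^{(n)}_ix^{(n)}_j+h_{i,j}(nk)^{-1}+o(n^{-1}).$$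
   Context: Preferred attachment affiliation model. Fix a real $\lambda>0$, an integer $k\ge 1$ and an integer $l\ge 0$ with $\lambda\le k+l$. At time $0$ a library contains books $w_1,\dots,w_l$, each with score $1$. For $n=0,1,2,\dots$, step $n+1$ proceeds as follows: $k$ new books $w_{l+nk+1},\dots,w_{l+(n+1)k}$ arrive, each with score $1$; then a customer $v_{n+1}$ arrives and, conditionally on the past and independently over books, downloads each book $w\in W_{n+1}=\{w_1,\dots,w_{l+(n+1)k}\}$ with probability $p_{n+1,s(w)}=\lambda s(w)/(l+(n+1)k+n\lambda)$, where $s(w)$ is the current score of $w$. Every book downloaded by $v_{n+1}$ then has its score increased by $1$. $W_n=\{w_1,\dots,w_{l+nk}\}$ and $s_n(w)$ denotes the score of $w$ after step $n$. $X^{(n)}_i$ is the number of books $w\in W_n$ with $s_n(w)=i$. Define $x^{(n)}_i=(nk)^{-1}\mathbf E X^{(n)}_i$ and $h^{(n)}_{i,j}=(nk)^{-1}\big(\mathbf E X^{(n)}_iX^{(n)}_j-\mathbf E X^{(n)}_i\,\mathbf E X^{(n)}_j\big)$. *)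

theory Defs
  imports "HOL-Probability.Probability" "HOL-Library.Landau_Symbols"
begin

(* A state is the score function: book w_{m+1} has index m; books not yet
   in the library have score 0. *)

definition paa_init :: "nat \<Rightarrow> (nat \<Rightarrow> nat)" where
  "paa_init l = (\<lambda>i. if i < l then 1 else 0)"

definition paa_step :: "real \<Rightarrow> nat \<Rightarrow> nat \<Rightarrow> nat \<Rightarrow> (nat \<Rightarrow> nat) \<Rightarrow> (nat \<Rightarrow> nat) pmf" where
  "paa_step lam k l n s =
     (let N = l + (n + 1) * k;
          s1 = (\<lambda>i. if i < l + n * k then s i else if i < N then 1 else 0)
      in map_pmf (\<lambda>D i. s1 i + (if D i then 1 else 0))
           (Pi_pmf {..<N} False
              (\<lambda>i. bernoulli_pmf (lam * real (s1 i) / (real N + real n * lam)))))"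

primrec paa_dist :: "real \<Rightarrow> nat \<Rightarrow> nat \<Rightarrow> nat \<Rightarrow> (nat \<Rightarrow> nat) pmf" where
  "paa_dist lam k l 0 = return_pmf (paa_init l)"
| "paa_dist lam k l (Suc n) = bind_pmf (paa_dist lam k l n) (paa_step lam k l n)"

definition paa_X :: "nat \<Rightarrow> nat \<Rightarrow> nat \<Rightarrow> nat \<Rightarrow> (nat \<Rightarrow> nat) \<Rightarrow> real" where
  "paa_X k l n i s = real (card {w. w < l + n * k \<and> s w = i})"

definition paa_EX :: "real \<Rightarrow> nat \<Rightarrow> nat \<Rightarrow> nat \<Rightarrow> nat \<Rightarrow> real" where
  "paa_EX lam k l n i = measure_pmf.expectation (paa_dist lam k l n) (paa_X k l n i)"

definition paa_EXX :: "real \<Rightarrow> nat \<Rightarrow> nat \<Rightarrow> nat \<Rightarrow> nat \<Rightarrow> nat \<Rightarrow> real" where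
  "paa_EXX lam k l n i j =
     measure_pmf.expectation (paa_dist lam k l n) (\<lambda>s. paa_X k l n i s * paa_X k l n j s)"

definition paa_xn :: "real \<Rightarrow> nat \<Rightarrow> nat \<Rightarrow> nat \<Rightarrow> nat \<Rightarrow> real" where
  "paa_xn lam k l n i = paa_EX lam k l n i / (real n * real k)"

definition paa_hn :: "real \<Rightarrow> nat \<Rightarrow> nat \<Rightarrow> nat \<Rightarrow> nat \<Rightarrow> nat \<Rightarrow> real" where
  "paa_hn lam k l n i j =
     (paa_EXX lam k l n i j - paa_EX lam k l n i * paa_EX lam k l n j) / (real n * real k)"

definition paa_x :: "real \<Rightarrow> nat \<Rightarrow> nat \<Rightarrow> real" where
  "paa_x lam k i = (let \<alpha> = real k / lam in
     if i = 0 then 0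
     else (1 + \<alpha>) * Gamma (2 + \<alpha>) * Gamma (real i) / Gamma (2 + \<alpha> + real i))"

end

theory Submission
  imports Defs
begin


lemma lin_rec:
  fixes u :: "nat \<Rightarrow> real"
  assumes c: "c > 0" and e: "e > 0"
  and R: "(\<lambda>n. u (Suc n) - (1 - c / (real n + e)) * u n - d) \<in> O(\<lambda>n. 1 / real n)"
  shows "(\<lambda>n. u n - d / (1 + c) * real n) \<in> O(\<lambda>_. 1)"
proof -
  define L where "L = d / (1 + c)"
  define R' where "R' = (\<lambda>n. u (Suc n) - (1 - c / (real n + e)) * u n - d)"
  define v where "v = (\<lambda>n. u n - L * (real n + e))"
  from R obtain M where M: "M > 0" and ev1: "eventually (\<lambda>n. norm (R' n) \<le> M * norm (1 / real n)) at_top"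
    unfolding R'_def by (elim landau_o.bigE)
  have ev2: "eventually (\<lambda>n. c / (real n + e) \<le> 1) at_top"
  proof -
    have "eventually (\<lambda>n. n \<ge> nat \<lceil>c\<rceil>) at_top" by (rule eventually_ge_at_top)
    then have "eventually (\<lambda>n. real n \<ge> c) at_top"
      by eventually_elim (meson real_nat_ceiling_ge of_nat_le_iff order_trans)
    then show ?thesis by eventually_elim (use e c in \<open>simp add: divide_le_eq\<close>)
  qed
  have ev3: "eventually (\<lambda>n::nat. n \<ge> 1) at_top" by (rule eventually_ge_at_top)
  from eventually_conj[OF ev1 eventually_conj[OF ev2 ev3]] obtain N0 where
    N0: "\<And>n. n \<ge> N0 \<Longrightarrow> norm (R' n) \<le> M * norm (1 / real n) \<and> c / (real n + e) \<le> 1 \<and> n \<ge> 1"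
    unfolding eventually_at_top_linorder by blast
  have vrec: "v (Suc n) = (1 - c / (real n + e)) * v n + R' n" for n
  proof -
    have ne: "real n + e \<noteq> 0" using e by (simp add: add_pos_nonneg)
    have Ld: "L * (1 + c) = d" using c by (simp add: L_def)
    define q where "q = c / (real n + e)"
    have qe: "q * (real n + e) = c" using ne by (simp add: q_def)
    have R'n: "R' n = u (Suc n) - (1 - q) * u n - d" by (simp add: R'_def q_def)
    have "v (Suc n) - ((1 - q) * v n + R' n) = d - L - L * (q * (real n + e))"
      unfolding R'n v_def by (simp add: algebra_simps)
    also have "\<dots> = 0" using Ld qe by (simp add: algebra_simps)
    finally show ?thesis by (simp add: q_def)
  qed
  define K where "K = max \<bar>v N0\<bar> (2 * M * (1 + e) / c)"
  have K0: "K \<ge> 0" unfolding K_def by simp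
  have cK: "c * K \<ge> 2 * M * (1 + e)" using c unfolding K_def
    by (simp add: field_simps max_def)
  have bound: "\<bar>v n\<bar> \<le> K" if "n \<ge> N0" for n
    using that
  proof (induction n rule: dec_induct)
    case base
    then show ?case by (simp add: K_def)
  next
    case (step n)
    have Nn: "norm (R' n) \<le> M * norm (1 / real n)" "c / (real n + e) \<le> 1" "n \<ge> 1"
      using N0[OF step(1)] by auto
    have n1: "real n \<ge> 1" using Nn(3) by simp
    have ne: "real n + e > 0" using e by (simp add: add_pos_nonneg)
    define q where "q = c / (real n + e)"
    have q0: "q \<ge> 0" "q \<le> 1" using c ne Nn(2) by (auto simp: q_def)
    have Rn: "\<bar>R' n\<bar> \<le> M / real n" using Nn(1) n1 by simp
    have key: "M / real n \<le> q * K"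
    proof -
      have "M * (real n + e) \<le> M * (2 * (1 + e) * real n)"
      proof (intro mult_left_mono)
        have "e \<le> e * real n" using mult_left_mono[of 1 "real n" e] e n1 by simp
        moreover have "2 * (1 + e) * real n = 2 * real n + 2 * (e * real n)" by (simp add: algebra_simps)
        ultimately show "real n + e \<le> 2 * (1 + e) * real n" using n1 e by linarith
      qed (use M in auto)
      also have "\<dots> = (2 * M * (1 + e)) * real n" by simp
      also have "\<dots> \<le> (c * K) * real n" using cK n1 by (intro mult_right_mono) auto
      finally have "M * (real n + e) \<le> c * K * real n" .
      then show ?thesis using ne n1 unfolding q_def by (simp add: field_simps)
    qed
    have "\<bar>v (Suc n)\<bar> \<le> (1 - q) * \<bar>v n\<bar> + \<bar>R' n\<bar>"
      unfolding vrec q_def[symmetric] using q0 by (simp add: abs_mult abs_triangle_ineq order_trans[OF abs_triangle_ineq])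
    also have "\<dots> \<le> (1 - q) * K + q * K"
      using step(3) q0 Rn key by (intro add_mono mult_left_mono) auto
    finally show ?case by (simp add: algebra_simps)
  qed
  show ?thesis
  proof (rule bigoI)
    show "eventually (\<lambda>n. norm (u n - d / (1 + c) * real n) \<le> (K + \<bar>L * e\<bar>) * norm (1::real)) at_top"
      unfolding eventually_at_top_linorder
    proof (intro exI allI impI)
      fix n assume "n \<ge> N0"
      have "u n - d / (1 + c) * real n = v n + L * e" unfolding v_def L_def by (simp add: algebra_simps add_divide_distrib)
      then show "norm (u n - d / (1 + c) * real n) \<le> (K + \<bar>L * e\<bar>) * norm (1::real)"
        using bound[OF \<open>n \<ge> N0\<close>] by simp
    qed
  qed
qed

lemma Hr:
  assumes e: "e > 0"
  shows "(\<lambda>n. a / (real n + e)) \<in> O(\<lambda>n. 1 / real n)"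
proof (rule bigoI)
  show "eventually (\<lambda>n. norm (a / (real n + e)) \<le> \<bar>a\<bar> * norm (1 / real n)) at_top"
    using eventually_ge_at_top[of "1::nat"]
  proof eventually_elim
    case (elim n)
    then have n: "real n > 0" by simp
    have "\<bar>a\<bar> / (real n + e) \<le> \<bar>a\<bar> / real n"
      using n e by (intro divide_left_mono) auto
    then show ?case using n e by (simp add: abs_div)
  qed
qed

lemma const_On: "(\<lambda>_. C) \<in> O(\<lambda>n. real n)"
proof (rule bigoI)
  show "eventually (\<lambda>n. norm C \<le> \<bar>C\<bar> * norm (real n)) at_top"
    using eventually_ge_at_top[of "1::nat"]
  proof eventually_elim
    case (elim n)
    then show ?case using mult_left_mono[of 1 "real n" "\<bar>C\<bar>"] by simp
  qed
qed

lemma inv_sq: "O(\<lambda>n. real n * (1 / real n * (1 / real n))) = O(\<lambda>n. 1 / real n)"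
  by (rule landau_o.big.cong) (use eventually_ge_at_top[of "1::nat"] in \<open>eventually_elim, simp\<close>)

lemma Hrr:
  assumes e: "e > 0" and f: "f \<in> O(\<lambda>n. real n)"
  shows "(\<lambda>n. f n * (a / (real n + e) * (b / (real n + e)))) \<in> O(\<lambda>n. 1 / real n)"
proof -
  have "(\<lambda>n. a / (real n + e) * (b / (real n + e))) \<in> O(\<lambda>n. 1 / real n * (1 / real n))"
    by (rule landau_o.big.mult[OF Hr[OF e] Hr[OF e]])
  from landau_o.big.mult[OF f this] show ?thesis by (simp only: inv_sq)
qed

lemma Hc_r:
  assumes e: "e > 0"
  shows "(\<lambda>n. C * (a / (real n + e))) \<in> O(\<lambda>n. 1 / real n)"
  using Hr[OF e, of "C * a"] by simp

lemma Hc_rr: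
  assumes e: "e > 0"
  shows "(\<lambda>n. C * (a / (real n + e) * (b / (real n + e)))) \<in> O(\<lambda>n. 1 / real n)"
  using Hrr[OF e const_On] .

lemma Hlin:
  assumes e: "e > 0" and h: "a = 0 \<or> (\<lambda>n. f n - L * real n) \<in> O(\<lambda>_. 1)"
  shows "(\<lambda>n. f n * (a / (real n + e)) - a * L) \<in> O(\<lambda>n. 1 / real n)"
proof (cases "a = 0")
  case True
  then show ?thesis by simp
next
  case False
  with h have lin: "(\<lambda>n. f n - L * real n) \<in> O(\<lambda>_. 1)" by simp
  have c: "(\<lambda>n. - (L * e)) \<in> O(\<lambda>_. 1)" by simp
  have "(\<lambda>n. f n - L * real n + - (L * e)) \<in> O(\<lambda>_. 1)" by (rule sum_in_bigo(1)[OF lin c])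
  from landau_o.big.mult[OF this Hr[OF e, of a]]
  have "(\<lambda>n. (f n - L * real n + - (L * e)) * (a / (real n + e))) \<in> O(\<lambda>n. 1 / real n)" by simp
  moreover have "(f n - L * real n + - (L * e)) * (a / (real n + e)) = f n * (a / (real n + e)) - a * L" for n
  proof -
    have ne: "real n + e \<noteq> 0" using e by (simp add: add_pos_nonneg)
    show ?thesis using ne by (simp add: field_simps)
  qed
  ultimately show ?thesis by simp
qed

lemma lin_On:
  assumes "(\<lambda>n. f n - L * real n) \<in> O(\<lambda>_. 1)"
  shows "f \<in> O(\<lambda>n. real n)"
proof -
  have "(\<lambda>_. 1::real) \<in> O(\<lambda>n. real n)" by (rule const_On)
  with assms have a: "(\<lambda>n. f n - L * real n) \<in> O(\<lambda>n. real n)" by (rule landau_o.big_trans)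
  have b: "(\<lambda>n. L * real n) \<in> O(\<lambda>n. real n)" by simp
  from sum_in_bigo(1)[OF a b] show ?thesis by simp
qed

lemma lin_tendsto:
  assumes "(\<lambda>n. f n - L * real n) \<in> O(\<lambda>_. 1)"
  shows "(\<lambda>n. f n / real n) \<longlonglongrightarrow> L"
proof -
  from assms obtain K where K: "K > 0" and ev: "eventually (\<lambda>n. norm (f n - L * real n) \<le> K * norm (1::real)) at_top"
    by (elim landau_o.bigE)
  have "((\<lambda>n. f n / real n - L) \<longlonglongrightarrow> 0)"
  proof (rule Lim_null_comparison)
    show "eventually (\<lambda>n. norm (f n / real n - L) \<le> K / real n) at_top"
      using eventually_conj[OF ev eventually_ge_at_top[of "1::nat"]]
    proof eventually_elim
      case (elim n)
      then have n: "real n > 0" by simp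
      have "f n / real n - L = (f n - L * real n) / real n" using n by (simp add: field_simps)
      then show ?case using elim n by (simp add: abs_div divide_right_mono)
    qed
    show "(\<lambda>n. K / real n) \<longlonglongrightarrow> 0" by (rule lim_const_over_n)
  qed
  then show ?thesis by (rule LIM_zero_cancel)
qed

lemma alg1: "(N::real) \<noteq> 0 \<Longrightarrow> (Fi * Fj - Sij + D) / N^2 - xi * xj
   = (Fi / N - xi) * (Fj / N) + xi * (Fj / N - xj) + (D - Sij) * (1 / N^2)"
  by (simp add: field_simps power2_eq_square)

lemma alg2: "(N::real) \<noteq> 0 \<Longrightarrow> X / N^2 - (A / N) * (B / N) - h / N = ((X - A * B) / N - h) * (1 / N)"
  by (simp add: field_simps power2_eq_square)

lemma On_O1: "(\<lambda>n. 1 / real n) \<in> O(\<lambda>_. 1::real)"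
proof (rule bigoI)
  show "eventually (\<lambda>n. norm (1 / real n) \<le> 1 * norm (1::real)) at_top"
    using eventually_ge_at_top[of "1::nat"] by eventually_elim simp
qed

lemma inv_kn:
  assumes c: "c > 0"
  shows "(\<lambda>n. 1 / (real n * c)) \<in> O(\<lambda>n. 1 / real n)"
proof (rule bigoI)
  show "eventually (\<lambda>n. norm (1 / (real n * c)) \<le> (1 / c) * norm (1 / real n)) at_top"
    using c by (simp add: abs_mult mult_ac)
qed

lemma inv_kn2:
  assumes c: "c > 0"
  shows "(\<lambda>n. 1 / (real n * c)^2) \<in> O(\<lambda>n. 1 / real n * (1 / real n))"
proof (rule bigoI)
  show "eventually (\<lambda>n. norm (1 / (real n * c)^2) \<le> (1 / c^2) * norm (1 / real n * (1 / real n))) at_top"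
    using c by (simp add: abs_mult power2_eq_square mult_ac)
qed

lemma O_mult_On_O1: "f \<in> O(\<lambda>n. 1 / real n) \<Longrightarrow> g \<in> O(\<lambda>_. 1) \<Longrightarrow> (\<lambda>n. f n * g n) \<in> O(\<lambda>n. 1 / real n)"
  by (drule (1) landau_o.big.mult) simp

lemma O_mult_O1_On: "f \<in> O(\<lambda>_. 1) \<Longrightarrow> g \<in> O(\<lambda>n. 1 / real n) \<Longrightarrow> (\<lambda>n. f n * g n) \<in> O(\<lambda>n. 1 / real n)"
  by (drule (1) landau_o.big.mult) simp



context fixes lam :: real and k l :: nat
  assumes lam_pos: "lam > 0" and k_pos: "k \<ge> 1"
begin

definition Dn :: "nat \<Rightarrow> real" where
  "Dn n = real (l + (n + 1) * k) + real n * lam"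

definition stepw :: "nat \<Rightarrow> nat \<Rightarrow> nat \<Rightarrow> nat pmf" where
  "stepw n w s = (let s1 = (if w < l + n * k then s else if w < l + (n+1) * k then 1 else 0)
     in map_pmf (\<lambda>b. s1 + (if b then 1 else 0)) (bernoulli_pmf (lam * real s1 / Dn n)))"

primrec marg :: "nat \<Rightarrow> nat \<Rightarrow> nat pmf" where
  "marg 0 w = return_pmf (paa_init l w)"
| "marg (Suc n) w = (if w < l + (n+1) * k then bind_pmf (marg n w) (stepw n w) else return_pmf 0)"

lemma marg_out: "w \<ge> l + n * k \<Longrightarrow> marg n w = return_pmf 0"
  by (induction n) (auto simp: paa_init_def)

lemma Pi_map_dep:
  assumes "finite A"
  shows "Pi_pmf A d (\<lambda>i. map_pmf (g i) (q i)) = map_pmf (\<lambda>D i. if i \<in> A then g i (D i) else d) (Pi_pmf A d' q)"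
proof -
  have "Pi_pmf A d (\<lambda>i. map_pmf (g i) (q i)) = Pi_pmf A d (\<lambda>i. bind_pmf (q i) (\<lambda>x. return_pmf (g i x)))"
    by (simp add: map_pmf_def)
  also have "\<dots> = bind_pmf (Pi_pmf A d' q) (\<lambda>f. Pi_pmf A d (\<lambda>i. return_pmf (g i (f i))))"
    by (rule Pi_pmf_bind[OF assms])
  also have "\<dots> = map_pmf (\<lambda>D i. if i \<in> A then g i (D i) else d) (Pi_pmf A d' q)"
    using assms by (simp add: map_pmf_def)
  finally show ?thesis .
qed

lemma dist_prod: "paa_dist lam k l n = Pi_pmf {..<l + n * k} 0 (\<lambda>w. marg n w)"
proof (induction n)
  case 0
  show ?case by (simp add: paa_init_def fun_eq_iff)
next
  case (Suc n)
  let ?A = "{..<l + n * k}" and ?A' = "{..<l + (Suc n) * k}"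
  have "Pi_pmf ?A' 0 (\<lambda>w. marg (Suc n) w) = Pi_pmf ?A' 0 (\<lambda>w. bind_pmf (marg n w) (stepw n w))"
    by (intro Pi_pmf_cong) auto
  also have "\<dots> = bind_pmf (Pi_pmf ?A' 0 (marg n)) (\<lambda>f. Pi_pmf ?A' 0 (\<lambda>w. stepw n w (f w)))"
    by (rule Pi_pmf_bind) auto
  also have "Pi_pmf ?A' 0 (marg n) = Pi_pmf ?A 0 (marg n)"
    by (rule Pi_pmf_subset') (auto simp: marg_out)
  also have "bind_pmf (Pi_pmf ?A 0 (marg n)) (\<lambda>f. Pi_pmf ?A' 0 (\<lambda>w. stepw n w (f w)))
      = bind_pmf (Pi_pmf ?A 0 (marg n)) (paa_step lam k l n)"
  proof (rule bind_pmf_cong[OF refl])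
    fix f assume f: "f \<in> set_pmf (Pi_pmf ?A 0 (marg n))"
    define s1 where "s1 = (\<lambda>i. if i < l + n * k then f i else if i < l + (n + 1) * k then 1 else (0::nat))"
    have "Pi_pmf ?A' 0 (\<lambda>w. stepw n w (f w)) =
       Pi_pmf ?A' 0 (\<lambda>w. map_pmf (\<lambda>b. s1 w + (if b then 1 else 0)) (bernoulli_pmf (lam * real (s1 w) / Dn n)))"
      by (intro Pi_pmf_cong) (auto simp: stepw_def s1_def Let_def)
    also have "\<dots> = map_pmf (\<lambda>D i. if i \<in> ?A' then s1 i + (if D i then 1 else 0) else 0)
         (Pi_pmf ?A' False (\<lambda>w. bernoulli_pmf (lam * real (s1 w) / Dn n)))"
      by (rule Pi_map_dep) auto
    also have "\<dots> = map_pmf (\<lambda>D i. s1 i + (if D i then 1 else 0))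
         (Pi_pmf ?A' False (\<lambda>w. bernoulli_pmf (lam * real (s1 w) / Dn n)))"
    proof (rule map_pmf_cong[OF refl])
      fix D assume "D \<in> set_pmf (Pi_pmf ?A' False (\<lambda>w. bernoulli_pmf (lam * real (s1 w) / Dn n)))"
      then have "\<forall>x. x \<notin> ?A' \<longrightarrow> D x = False" using set_Pi_pmf_subset[of ?A' False] by blast
      then show "(\<lambda>i. if i \<in> ?A' then s1 i + (if D i then 1 else 0) else 0) = (\<lambda>i. s1 i + (if D i then 1 else 0))"
        by (auto simp: fun_eq_iff s1_def)
    qed
    also have "\<dots> = paa_step lam k l n f"
      by (simp only: paa_step_def Let_def s1_def Dn_def Suc_eq_plus1)
    finally show "Pi_pmf ?A' 0 (\<lambda>w. stepw n w (f w)) = paa_step lam k l n f" .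
  qed
  finally show ?case using Suc by simp
qed


lemma X_sum: "paa_X k l n i s = (\<Sum>w<l + n * k. indicator {s. s w = i} s)"
proof -
  have "(\<Sum>w<l + n * k. (indicator {s. s w = i} s :: real)) = (\<Sum>w<l + n * k. of_bool (s w = i))"
    by (intro sum.cong) (auto simp: indicator_def)
  also have "\<dots> = real (card ({..<l + n * k} \<inter> {w. s w = i}))" by simp
  also have "{..<l + n * k} \<inter> {w. s w = i} = {w. w < l + n * k \<and> s w = i}" by auto
  finally show ?thesis by (simp add: paa_X_def)
qed

lemma int_ind: "integrable (measure_pmf M) (indicator A :: _ \<Rightarrow> real)"
  unfolding integrable_indicator_iff by (simp add: less_top[symmetric])

lemma EX_sum: "paa_EX lam k l n i = (\<Sum>w<l + n * k. pmf (marg n w) i)"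
proof -
  let ?P = "Pi_pmf {..<l + n * k} 0 (\<lambda>w. marg n w)"
  have "paa_EX lam k l n i = measure_pmf.expectation ?P (\<lambda>s. \<Sum>w<l + n * k. indicator {s. s w = i} s)"
    unfolding paa_EX_def dist_prod X_sum ..
  also have "\<dots> = (\<Sum>w<l + n * k. measure_pmf.expectation ?P (indicator {s. s w = i}))"
    by (rule Bochner_Integration.integral_sum) (rule int_ind)
  also have "\<dots> = (\<Sum>w<l + n * k. pmf (marg n w) i)"
  proof (intro sum.cong refl)
    fix w assume w: "w \<in> {..<l + n * k}"
    have "measure_pmf.expectation ?P (indicator {s. s w = i}) = measure ?P ((\<lambda>s. s w) -` {i})"
      by (simp add: vimage_def)
    also have "\<dots> = pmf (map_pmf (\<lambda>s. s w) ?P) i" by (simp add: pmf_map)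
    also have "\<dots> = pmf (marg n w) i" using w by (subst Pi_pmf_component) auto
    finally show "measure_pmf.expectation ?P (indicator {s. s w = i}) = pmf (marg n w) i" .
  qed
  finally show ?thesis .
qed

lemma Pi_pair:
  assumes "finite A" "w \<in> A" "v \<in> A" "w \<noteq> v"
  shows "map_pmf (\<lambda>f. (f w, f v)) (Pi_pmf A d p) = pair_pmf (p w) (p v)"
proof -
  have A: "A = insert w (A - {w})" using assms by auto
  have "map_pmf (\<lambda>f. (f w, f v)) (Pi_pmf A d p) =
      map_pmf (\<lambda>f. (f w, f v)) (map_pmf (\<lambda>(y,f). f(w:=y)) (pair_pmf (p w) (Pi_pmf (A - {w}) d p)))"
    by (subst A, subst Pi_pmf_insert) (use assms in auto)
  also have "\<dots> = map_pmf (\<lambda>(y,f). (y, f v)) (pair_pmf (p w) (Pi_pmf (A - {w}) d p))"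
    using assms by (simp add: pmf.map_comp o_def case_prod_unfold)
  also have "(\<lambda>(y,f). (y, f v)) = (\<lambda>(a,b). (id a, (\<lambda>f. f v) b))" by auto
  also have "map_pmf \<dots> (pair_pmf (p w) (Pi_pmf (A - {w}) d p))
     = pair_pmf (map_pmf id (p w)) (map_pmf (\<lambda>f. f v) (Pi_pmf (A - {w}) d p))"
    by (rule map_pair)
  also have "\<dots> = pair_pmf (p w) (p v)"
    using assms by (subst Pi_pmf_component) (auto simp: pmf.map_id)
  finally show ?thesis .
qed

lemma EXX_sum: "paa_EXX lam k l n i j = (\<Sum>w<l + n * k. \<Sum>v<l + n * k.
    if w = v then (if i = j then pmf (marg n w) i else 0) else pmf (marg n w) i * pmf (marg n v) j)"
proof -
  let ?P = "Pi_pmf {..<l + n * k} 0 (\<lambda>w. marg n w)"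
  have "paa_EXX lam k l n i j = measure_pmf.expectation ?P
       (\<lambda>s. \<Sum>w<l + n * k. \<Sum>v<l + n * k. indicator {s. s w = i \<and> s v = j} s)"
    unfolding paa_EXX_def dist_prod X_sum sum_product
    by (intro Bochner_Integration.integral_cong refl sum.cong) (auto simp: indicator_def)
  also have "\<dots> = (\<Sum>w<l + n * k. \<Sum>v<l + n * k. measure_pmf.expectation ?P (indicator {s. s w = i \<and> s v = j}))"
    by (simp add: Bochner_Integration.integral_sum int_ind)
  also have "\<dots> = (\<Sum>w<l + n * k. \<Sum>v<l + n * k.
    if w = v then (if i = j then pmf (marg n w) i else 0) else pmf (marg n w) i * pmf (marg n v) j)"
  proof (intro sum.cong refl)
    fix w v assume w: "w \<in> {..<l + n * k}" and v: "v \<in> {..<l + n * k}"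
    show "measure_pmf.expectation ?P (indicator {s. s w = i \<and> s v = j}) =
      (if w = v then (if i = j then pmf (marg n w) i else 0) else pmf (marg n w) i * pmf (marg n v) j)"
    proof (cases "w = v")
      case True
      then show ?thesis
      proof (cases "i = j")
        case True
        have "measure_pmf.expectation ?P (indicator {s. s w = i \<and> s v = j}) = measure ?P ((\<lambda>s. s w) -` {i})"
          using \<open>w = v\<close> True by (simp add: vimage_def)
        also have "\<dots> = pmf (map_pmf (\<lambda>s. s w) ?P) i" by (simp add: pmf_map)
        also have "\<dots> = pmf (marg n w) i" using w by (subst Pi_pmf_component) auto
        finally show ?thesis using \<open>w = v\<close> True by simp
      next
        case False
        have "indicator {s. s w = i \<and> s v = j} = (\<lambda>_. 0::real)" using False \<open>w = v\<close>
          by (auto simp: indicator_def fun_eq_iff)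
        then show ?thesis using False \<open>w = v\<close> by simp
      qed
    next
      case False
      have "measure_pmf.expectation ?P (indicator {s. s w = i \<and> s v = j}) = measure ?P ((\<lambda>s. (s w, s v)) -` {(i,j)})"
        by (simp add: vimage_def)
      also have "\<dots> = pmf (map_pmf (\<lambda>s. (s w, s v)) ?P) (i,j)" by (simp add: pmf_map)
      also have "\<dots> = pmf (marg n w) i * pmf (marg n v) j" using w v False by (subst Pi_pair) (auto simp: pmf_pair)
      finally show ?thesis using False by simp
    qed
  qed
  finally show ?thesis .
qed

definition rho :: "nat \<Rightarrow> nat \<Rightarrow> real" where
  "rho n s = pmf (bernoulli_pmf (lam * real s / Dn n)) True"

definition Q :: "nat \<Rightarrow> nat \<Rightarrow> nat pmf" where
  "Q n w = (if w < l + n * k then marg n w else return_pmf 1)"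

definition F :: "nat \<Rightarrow> nat \<Rightarrow> real" where
  "F n i = (\<Sum>w<l + n * k. pmf (marg n w) i)"

definition S :: "nat \<Rightarrow> nat \<Rightarrow> nat \<Rightarrow> real" where
  "S n i j = (\<Sum>w<l + n * k. pmf (marg n w) i * pmf (marg n w) j)"

lemma bern_False: "pmf (bernoulli_pmf p) False = 1 - pmf (bernoulli_pmf p) True"
proof -
  have "(\<Sum>x\<in>UNIV. pmf (bernoulli_pmf p) x) = 1" by (rule sum_pmf_eq_1) auto
  then show ?thesis by (simp add: UNIV_bool)
qed

lemma rho0: "rho n 0 = 0"
  by (simp add: rho_def)

lemma marg_Suc':
  assumes "w < l + (n+1) * k"
  shows "marg (Suc n) w = bind_pmf (Q n w) (\<lambda>s. map_pmf (\<lambda>b. s + (if b then 1 else 0)) (bernoulli_pmf (lam * real s / Dn n)))"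
proof (cases "w < l + n * k")
  case True
  have "stepw n w = (\<lambda>s. map_pmf (\<lambda>b. s + (if b then 1 else 0)) (bernoulli_pmf (lam * real s / Dn n)))"
    using True by (simp add: fun_eq_iff stepw_def Let_def)
  then show ?thesis using True assms by (simp add: Q_def)
next
  case False
  then show ?thesis using assms by (simp add: Q_def stepw_def marg_out bind_return_pmf Let_def)
qed

lemma pmf_stepmap: "pmf (map_pmf (\<lambda>b. s + (if b then 1 else 0)) (bernoulli_pmf p)) i =
   (if s = i then pmf (bernoulli_pmf p) False else 0) + (if Suc s = i then pmf (bernoulli_pmf p) True else 0)"
proof -
  have "pmf (map_pmf (\<lambda>b. s + (if b then 1 else 0)) (bernoulli_pmf p)) i =
      measure (bernoulli_pmf p) ((\<lambda>b. s + (if b then 1 else 0)) -` {i})" by (rule pmf_map)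
  moreover have "s = i \<Longrightarrow> (\<lambda>b. s + (if b then 1 else 0)) -` {i} = {False}" by auto
  moreover have "Suc s = i \<Longrightarrow> (\<lambda>b. s + (if b then 1 else 0)) -` {i} = {True}" by (auto split: if_splits)
  moreover have "s \<noteq> i \<Longrightarrow> Suc s \<noteq> i \<Longrightarrow> (\<lambda>b. s + (if b then 1 else 0)) -` {i} = {}" by (auto split: if_splits)
  ultimately show ?thesis by (auto simp: measure_pmf_single)
qed

lemma marg_rec:
  assumes "w < l + (n+1) * k"
  shows "pmf (marg (Suc n) w) (Suc i) = pmf (Q n w) (Suc i) * (1 - rho n (Suc i)) + pmf (Q n w) i * rho n i"
proof -
  have "pmf (marg (Suc n) w) (Suc i) = measure_pmf.expectation (Q n w)
     (\<lambda>s. pmf (map_pmf (\<lambda>b. s + (if b then 1 else 0)) (bernoulli_pmf (lam * real s / Dn n))) (Suc i))"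
    unfolding marg_Suc'[OF assms] by (simp only: pmf_bind)
  also have "\<dots> = measure_pmf.expectation (Q n w)
     (\<lambda>s. (1 - rho n (Suc i)) * indicator {Suc i} s + rho n i * indicator {i} s)"
    by (intro Bochner_Integration.integral_cong refl) (auto simp: pmf_stepmap bern_False rho_def indicator_def)
  also have "\<dots> = (1 - rho n (Suc i)) * measure_pmf.expectation (Q n w) (indicator {Suc i})
      + rho n i * measure_pmf.expectation (Q n w) (indicator {i})"
    by (simp add: int_ind)
  also have "\<dots> = pmf (Q n w) (Suc i) * (1 - rho n (Suc i)) + pmf (Q n w) i * rho n i"
    by (simp add: measure_pmf_single)
  finally show ?thesis .
qed

lemma sum_split:
  fixes g :: "nat \<Rightarrow> real"
  shows "(\<Sum>w<l + (n+1) * k. g w) = (\<Sum>w<l + n * k. g w) + (\<Sum>w\<in>{l + n * k..<l + (n+1) * k}. g w)"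
proof -
  have "(\<Sum>w<l + (n+1) * k. g w) = (\<Sum>w\<in>{0..<l + (n+1) * k}. g w)" by (simp add: lessThan_atLeast0)
  also have "\<dots> = (\<Sum>w\<in>{0..<l + n * k}. g w) + (\<Sum>w\<in>{l + n * k..<l + (n+1) * k}. g w)"
    by (rule sum.atLeastLessThan_concat[symmetric]) auto
  finally show ?thesis by (simp add: lessThan_atLeast0)
qed

lemma sumG: "(\<Sum>w<l + (n+1) * k. pmf (Q n w) i) = F n i + real k * (if i = 1 then 1 else 0)"
proof -
  have "(\<Sum>w\<in>{l + n * k..<l + (n+1) * k}. pmf (Q n w) i) = (\<Sum>w\<in>{l + n * k..<l + (n+1) * k}. (if i = 1 then 1 else 0))"
    by (intro sum.cong) (auto simp: Q_def)
  also have "\<dots> = real k * (if i = 1 then 1 else 0)" by simp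
  finally show ?thesis unfolding sum_split F_def
    by (intro arg_cong2[where f="(+)"] sum.cong) (auto simp: Q_def)
qed

lemma sumGG: "(\<Sum>w<l + (n+1) * k. pmf (Q n w) i * pmf (Q n w) j) = S n i j + real k * (if i = 1 \<and> j = 1 then 1 else 0)"
proof -
  have "(\<Sum>w\<in>{l + n * k..<l + (n+1) * k}. pmf (Q n w) i * pmf (Q n w) j) = (\<Sum>w\<in>{l + n * k..<l + (n+1) * k}. (if i = 1 \<and> j = 1 then 1 else 0))"
    by (intro sum.cong) (auto simp: Q_def)
  also have "\<dots> = real k * (if i = 1 \<and> j = 1 then 1 else 0)" by simp
  finally show ?thesis unfolding sum_split S_def
    by (intro arg_cong2[where f="(+)"] sum.cong) (auto simp: Q_def)
qed

lemma F_rec: "F (Suc n) (Suc i) = (1 - rho n (Suc i)) * (F n (Suc i) + real k * (if Suc i = 1 then 1 else 0))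
   + rho n i * (F n i + real k * (if i = 1 then 1 else 0))"
proof -
  have "F (Suc n) (Suc i) = (\<Sum>w<l + (n+1) * k. pmf (Q n w) (Suc i) * (1 - rho n (Suc i)) + pmf (Q n w) i * rho n i)"
    unfolding F_def by (intro sum.cong) (auto simp del: marg.simps simp add: marg_rec)
  also have "\<dots> = (1 - rho n (Suc i)) * (\<Sum>w<l + (n+1) * k. pmf (Q n w) (Suc i)) + rho n i * (\<Sum>w<l + (n+1) * k. pmf (Q n w) i)"
    by (simp add: sum.distrib sum_distrib_left mult.commute)
  finally show ?thesis by (simp only: sumG)
qed

lemma S_rec: "S (Suc n) (Suc i) (Suc j) =
    (1 - rho n (Suc i)) * (1 - rho n (Suc j)) * (S n (Suc i) (Suc j) + real k * (if Suc i = 1 \<and> Suc j = 1 then 1 else 0))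
  + (1 - rho n (Suc i)) * rho n j * (S n (Suc i) j + real k * (if Suc i = 1 \<and> j = 1 then 1 else 0))
  + rho n i * (1 - rho n (Suc j)) * (S n i (Suc j) + real k * (if i = 1 \<and> Suc j = 1 then 1 else 0))
  + rho n i * rho n j * (S n i j + real k * (if i = 1 \<and> j = 1 then 1 else 0))"
proof -
  let ?G = "\<lambda>w a. pmf (Q n w) a"
  let ?N = "l + (n+1) * k"
  have "S (Suc n) (Suc i) (Suc j) = (\<Sum>w<?N. (?G w (Suc i) * (1 - rho n (Suc i)) + ?G w i * rho n i) *
       (?G w (Suc j) * (1 - rho n (Suc j)) + ?G w j * rho n j))"
    unfolding S_def by (intro sum.cong) (auto simp del: marg.simps simp add: marg_rec)
  also have "\<dots> = (\<Sum>w<?N. (1 - rho n (Suc i)) * (1 - rho n (Suc j)) * (?G w (Suc i) * ?G w (Suc j))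
     + (1 - rho n (Suc i)) * rho n j * (?G w (Suc i) * ?G w j)
     + rho n i * (1 - rho n (Suc j)) * (?G w i * ?G w (Suc j))
     + rho n i * rho n j * (?G w i * ?G w j))"
    by (intro sum.cong refl) (simp add: algebra_simps)
  also have "\<dots> = (1 - rho n (Suc i)) * (1 - rho n (Suc j)) * (\<Sum>w<?N. ?G w (Suc i) * ?G w (Suc j))
     + (1 - rho n (Suc i)) * rho n j * (\<Sum>w<?N. ?G w (Suc i) * ?G w j)
     + rho n i * (1 - rho n (Suc j)) * (\<Sum>w<?N. ?G w i * ?G w (Suc j))
     + rho n i * rho n j * (\<Sum>w<?N. ?G w i * ?G w j)"
    by (simp only: sum.distrib sum_distrib_left)
  finally show ?thesis by (simp only: sumGG)
qed

definition alpha :: real where "alpha = real k / lam"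
definition ee :: real where "ee = real (l + k) / (real k + lam)"
definition cc :: "nat \<Rightarrow> real" where "cc i = real i / (1 + alpha)"

lemma alpha_pos: "alpha > 0"
  using lam_pos k_pos by (simp add: alpha_def)

lemma ee_pos: "ee > 0"
  using lam_pos k_pos by (simp add: ee_def)

lemma cc_pos: "cc (Suc i) > 0"
  using alpha_pos by (simp add: cc_def)

lemma cc0: "cc 0 = 0" by (simp add: cc_def)

lemma rho_ev: "eventually (\<lambda>n. rho n i = cc i / (real n + ee)) at_top"
proof -
  have kl: "real k + lam > 0" using lam_pos by simp
  have D: "Dn n = (real n + ee) * (real k + lam)" for n
    unfolding Dn_def ee_def using kl by (simp add: field_simps)
  have C: "cc i = real i * lam / (real k + lam)"
    unfolding cc_def alpha_def using lam_pos kl by (simp add: field_simps)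
  have eq: "lam * real i / Dn n = cc i / (real n + ee)" for n
    unfolding D C using kl ee_pos by (simp add: field_simps)
  have "eventually (\<lambda>n. n \<ge> nat \<lceil>cc i\<rceil>) at_top" by (rule eventually_ge_at_top)
  then show ?thesis
  proof eventually_elim
    case (elim n)
    then have n: "real n \<ge> cc i" by (meson real_nat_ceiling_ge of_nat_le_iff order_trans)
    have c0: "cc i \<ge> 0" using alpha_pos by (simp add: cc_def)
    have ne: "real n + ee > 0" using ee_pos by (simp add: add_pos_nonneg)
    have "cc i / (real n + ee) \<le> 1" using n ne ee_pos by (simp add: divide_le_eq)
    moreover have "cc i / (real n + ee) \<ge> 0" using c0 ne by simp
    ultimately show ?case unfolding rho_def eq by simp
  qed
qed

lemma S_bounds: "0 \<le> S n a b" "S n a b \<le> real (l + n * k)"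
proof -
  show "0 \<le> S n a b" unfolding S_def by (intro sum_nonneg) auto
  have "S n a b \<le> (\<Sum>w<l + n * k. 1)" unfolding S_def
    by (intro sum_mono) (auto intro: mult_le_one pmf_le_1)
  then show "S n a b \<le> real (l + n * k)" by simp
qed

lemma F_bounds: "0 \<le> F n a" "F n a \<le> real (l + n * k)"
proof -
  show "0 \<le> F n a" unfolding F_def by (intro sum_nonneg) auto
  have "F n a \<le> (\<Sum>w<l + n * k. 1)" unfolding F_def
    by (intro sum_mono) (auto intro: pmf_le_1)
  then show "F n a \<le> real (l + n * k)" by simp
qed

lemma lin_bound_On:
  assumes "\<And>n. \<bar>f n\<bar> \<le> real (l + n * k)"
  shows "f \<in> O(\<lambda>n. real n)"
proof (rule bigoI)
  show "eventually (\<lambda>n. norm (f n) \<le> real (l + k) * norm (real n)) at_top"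
    using eventually_ge_at_top[of "1::nat"]
  proof eventually_elim
    case (elim n)
    have "real l \<le> real l * real n" using elim mult_left_mono[of 1 "real n" "real l"] by simp
    then have "real (l + n * k) \<le> real (l + k) * real n" by (simp add: algebra_simps)
    then show ?case using assms[of n] by simp
  qed
qed

lemma S_On: "(\<lambda>n. S n a b) \<in> O(\<lambda>n. real n)"
  by (rule lin_bound_On) (use S_bounds in auto)

lemma F_On: "(\<lambda>n. F n a) \<in> O(\<lambda>n. real n)"
  by (rule lin_bound_On) (use F_bounds in auto)

primrec Lf :: "nat \<Rightarrow> real" where
  "Lf 0 = 0"
| "Lf (Suc i) = (cc i * Lf i + real k * (if Suc i = 1 then 1 else 0)) / (1 + cc (Suc i))"

lemma identF: "(1 - x) * (F1 + p) + y * (F0 + q) - (1 - x) * F1 - (c + p) = (F0 * y - c) + ((-p) * x + q * y)"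
  for x y F1 F0 p q c :: real by (simp add: algebra_simps)

lemma F_step:
  assumes hyp: "cc i = 0 \<or> (\<lambda>n. F n i - Lf i * real n) \<in> O(\<lambda>_. 1)"
  shows "(\<lambda>n. F n (Suc i) - Lf (Suc i) * real n) \<in> O(\<lambda>_. 1)"
proof -
  define d where "d = cc i * Lf i + real k * (if Suc i = 1 then 1 else 0)"
  define g where "g = (\<lambda>n. F n i * (cc i / (real n + ee)) - cc i * Lf i)"
  have g: "g \<in> O(\<lambda>n. 1 / real n)" unfolding g_def by (rule Hlin[OF ee_pos hyp])
  have ev: "eventually (\<lambda>n. F (Suc n) (Suc i) - (1 - cc (Suc i) / (real n + ee)) * F n (Suc i) - d
     = g n + ((- (real k * (if Suc i = 1 then 1 else 0))) * (cc (Suc i) / (real n + ee))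
        + (real k * (if i = 1 then 1 else 0)) * (cc i / (real n + ee)))) at_top"
    using rho_ev[of "Suc i"] rho_ev[of i]
  proof eventually_elim
    case (elim n)
    show ?case unfolding F_rec d_def g_def by (simp only: elim) (rule identF)
  qed
  have R: "(\<lambda>n. F (Suc n) (Suc i) - (1 - cc (Suc i) / (real n + ee)) * F n (Suc i) - d) \<in> O(\<lambda>n. 1 / real n)"
    by (subst landau_o.big.in_cong[OF ev]) (intro sum_in_bigo g Hc_r[OF ee_pos])
  from lin_rec[OF cc_pos ee_pos R] show ?thesis by (simp add: d_def)
qed

lemma F_lin: "(\<lambda>n. F n (Suc i) - Lf (Suc i) * real n) \<in> O(\<lambda>_. 1)"
proof (induction i)
  case 0 show ?case by (rule F_step) (simp add: cc0)
next
  case (Suc i) show ?case by (rule F_step) (use Suc in simp)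
qed

function sg :: "nat \<Rightarrow> nat \<Rightarrow> real" where
  "sg i j = (if i = 0 \<or> j = 0 then 0 else
     (cc (i - 1) * sg (i - 1) j + cc (j - 1) * sg i (j - 1) + real k * (if i = 1 \<and> j = 1 then 1 else 0))
       / (1 + cc i + cc j))"
  by pat_completeness auto
termination by (relation "Wellfounded.measure (\<lambda>(i, j). i + j)") auto

declare sg.simps[simp del]

lemma sg0: "sg 0 j = 0" "sg i 0 = 0" by (subst sg.simps; simp)+

lemma sg_Suc: "sg (Suc i) (Suc j) = (cc i * sg i (Suc j) + cc j * sg (Suc i) j
    + real k * (if Suc i = 1 \<and> Suc j = 1 then 1 else 0)) / (1 + (cc (Suc i) + cc (Suc j)))"
  by (subst sg.simps) (simp add: add.assoc)

lemma sg_sym: "sg i j = sg j i"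
proof (induction "i + j" arbitrary: i j rule: less_induct)
  case less
  show ?case
  proof (cases "i = 0 \<or> j = 0")
    case True then show ?thesis by (auto simp: sg0)
  next
    case False
    then obtain i' j' where ij: "i = Suc i'" "j = Suc j'" by (meson not0_implies_Suc)
    have "sg i' (Suc j') = sg (Suc j') i'" using less ij by simp
    moreover have "sg (Suc i') j' = sg j' (Suc i')" using less ij by simp
    ultimately show ?thesis unfolding ij sg_Suc by (simp add: algebra_simps conj_commute)
  qed
qed

lemma identS: "(1 - A) * (1 - B) * (S11 + p) + (1 - A) * b * (S10 + q) + a * (1 - B) * (S01 + r) + a * b * (S00 + t)
   - (1 - (A + B)) * S11 - (ci * s1 + cj * s2 + p)
 = S11 * (A * B) + p * (A * B) - p * A - p * B + (S10 * b - cj * s2) - S10 * (A * b) + q * b - q * (A * b)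
   + (S01 * a - ci * s1) - S01 * (a * B) + r * a - r * (a * B) + S00 * (a * b) + t * (a * b)"
  for A B a b S11 S10 S01 S00 p q r t ci cj s1 s2 :: real by (simp add: algebra_simps)

lemma S_step:
  assumes h1: "cc j = 0 \<or> (\<lambda>n. S n (Suc i) j - sg (Suc i) j * real n) \<in> O(\<lambda>_. 1)"
  and h2: "cc i = 0 \<or> (\<lambda>n. S n i (Suc j) - sg i (Suc j) * real n) \<in> O(\<lambda>_. 1)"
  shows "(\<lambda>n. S n (Suc i) (Suc j) - sg (Suc i) (Suc j) * real n) \<in> O(\<lambda>_. 1)"
proof -
  define p where "p = real k * (if Suc i = 1 \<and> Suc j = 1 then 1 else 0)"
  define q where "q = real k * (if Suc i = 1 \<and> j = 1 then 1 else 0)"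
  define r where "r = real k * (if i = 1 \<and> Suc j = 1 then 1 else 0)"
  define t where "t = real k * (if i = 1 \<and> j = 1 then 1 else (0::real))"
  define d where "d = cc i * sg i (Suc j) + cc j * sg (Suc i) j + p"
  define c where "c = cc (Suc i) + cc (Suc j)"
  define g1 where "g1 = (\<lambda>n. S n (Suc i) j * (cc j / (real n + ee)) - cc j * sg (Suc i) j)"
  define g2 where "g2 = (\<lambda>n. S n i (Suc j) * (cc i / (real n + ee)) - cc i * sg i (Suc j))"
  have g1: "g1 \<in> O(\<lambda>n. 1 / real n)" unfolding g1_def by (rule Hlin[OF ee_pos h1])
  have g2: "g2 \<in> O(\<lambda>n. 1 / real n)" unfolding g2_def by (rule Hlin[OF ee_pos h2])
  have cpos: "c > 0" unfolding c_def using cc_pos[of i] cc_pos[of j] by simp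
  have ev: "eventually (\<lambda>n. S (Suc n) (Suc i) (Suc j) - (1 - c / (real n + ee)) * S n (Suc i) (Suc j) - d
     = S n (Suc i) (Suc j) * (cc (Suc i) / (real n + ee) * (cc (Suc j) / (real n + ee)))
       + p * (cc (Suc i) / (real n + ee) * (cc (Suc j) / (real n + ee)))
       - p * (cc (Suc i) / (real n + ee)) - p * (cc (Suc j) / (real n + ee))
       + g1 n - S n (Suc i) j * (cc (Suc i) / (real n + ee) * (cc j / (real n + ee)))
       + q * (cc j / (real n + ee)) - q * (cc (Suc i) / (real n + ee) * (cc j / (real n + ee)))
       + g2 n - S n i (Suc j) * (cc i / (real n + ee) * (cc (Suc j) / (real n + ee)))
       + r * (cc i / (real n + ee)) - r * (cc i / (real n + ee) * (cc (Suc j) / (real n + ee)))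
       + S n i j * (cc i / (real n + ee) * (cc j / (real n + ee)))
       + t * (cc i / (real n + ee) * (cc j / (real n + ee)))) at_top"
    using rho_ev[of "Suc i"] rho_ev[of "Suc j"] rho_ev[of i] rho_ev[of j]
  proof eventually_elim
    case (elim n)
    have cs: "c / (real n + ee) = cc (Suc i) / (real n + ee) + cc (Suc j) / (real n + ee)"
      unfolding c_def by (simp add: add_divide_distrib)
    show ?case unfolding S_rec d_def g1_def g2_def cs p_def[symmetric] q_def[symmetric] r_def[symmetric] t_def[symmetric]
      by (simp only: elim) (rule identS)
  qed
  have R: "(\<lambda>n. S (Suc n) (Suc i) (Suc j) - (1 - c / (real n + ee)) * S n (Suc i) (Suc j) - d) \<in> O(\<lambda>n. 1 / real n)"
    by (subst landau_o.big.in_cong[OF ev])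
       (intro sum_in_bigo g1 g2 Hc_r[OF ee_pos] Hc_rr[OF ee_pos] Hrr[OF ee_pos S_On])
  from lin_rec[OF cpos ee_pos R] show ?thesis by (simp add: d_def c_def p_def sg_Suc)
qed

lemma S_lin: "(\<lambda>n. S n (Suc i) (Suc j) - sg (Suc i) (Suc j) * real n) \<in> O(\<lambda>_. 1)"
proof (induction "i + j" arbitrary: i j rule: less_induct)
  case less
  show ?case
  proof (rule S_step)
    show "cc j = 0 \<or> (\<lambda>n. S n (Suc i) j - sg (Suc i) j * real n) \<in> O(\<lambda>_. 1)"
    proof (cases j)
      case 0 then show ?thesis by (simp add: cc0)
    next
      case (Suc j') then show ?thesis using less[of i j'] by simp
    qed
    show "cc i = 0 \<or> (\<lambda>n. S n i (Suc j) - sg i (Suc j) * real n) \<in> O(\<lambda>_. 1)"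
    proof (cases i)
      case 0 then show ?thesis by (simp add: cc0)
    next
      case (Suc i') then show ?thesis using less[of i' j] by simp
    qed
  qed
qed

lemma x_eq: "paa_x lam k i = Lf i / real k"
proof (induction i)
  case 0 show ?case by (simp add: paa_x_def)
next
  case (Suc i)
  have a: "alpha > 0" by (rule alpha_pos)
  have kp: "real k > 0" using k_pos by simp
  have nz: "z > 0 \<Longrightarrow> z \<notin> \<int>\<^sub>\<le>\<^sub>0" for z :: real using nonpos_Ints_nonpos by fastforce
  show ?case
  proof (cases i)
    case 0
    have g3: "Gamma (2 + alpha + 1) = (2 + alpha) * Gamma (2 + alpha)"
      by (rule Gamma_plus1) (rule nz, use a in simp)
    have gp: "Gamma (2 + alpha) > 0" using a by simp
    have gn: "Gamma (2 + alpha) \<noteq> 0" using gp by (metis less_irrefl)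
    have "paa_x lam k (Suc i) = (1 + alpha) * Gamma (2 + alpha) * Gamma 1 / Gamma (2 + alpha + 1)"
      unfolding 0 paa_x_def Let_def alpha_def[symmetric] by simp
    also have "\<dots> = (1 + alpha) / (2 + alpha)"
      unfolding g3 using gn a by simp
    also have "\<dots> = Lf (Suc i) / real k"
    proof -
      have c1: "1 + cc (Suc 0) = (2 + alpha) / (1 + alpha)" using a by (simp add: cc_def field_simps)
      have "Lf (Suc 0) = real k / ((2 + alpha) / (1 + alpha))" by (simp add: c1 cc0)
      also have "\<dots> = real k * (1 + alpha) / (2 + alpha)" by simp
      finally show ?thesis unfolding 0 using kp by simp
    qed
    finally show ?thesis .
  next
    case (Suc m)
    have g1: "Gamma (real (Suc m) + 1) = real (Suc m) * Gamma (real (Suc m))"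
      by (rule Gamma_plus1) (rule nz, simp)
    have g2: "Gamma (2 + alpha + real (Suc m) + 1) = (2 + alpha + real (Suc m)) * Gamma (2 + alpha + real (Suc m))"
      by (rule Gamma_plus1) (rule nz, use a in simp)
    have gp: "Gamma (2 + alpha + real (Suc m)) > 0" "Gamma (2 + alpha) > 0" "Gamma (real (Suc m)) > 0" using a by simp_all
    have gn: "Gamma (2 + alpha + real (Suc m)) \<noteq> 0" "Gamma (2 + alpha) \<noteq> 0" "Gamma (real (Suc m)) \<noteq> 0"
      using gp by (metis less_irrefl)+
    have IH: "(1 + alpha) * Gamma (2 + alpha) * Gamma (real (Suc m)) / Gamma (2 + alpha + real (Suc m)) = Lf (Suc m) / real k"
      using Suc.IH Suc unfolding paa_x_def Let_def alpha_def[symmetric] by simp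
    have e1: "real (Suc (Suc m)) = real (Suc m) + 1" by simp
    have e2: "2 + alpha + real (Suc (Suc m)) = 2 + alpha + real (Suc m) + 1" by simp
    have "paa_x lam k (Suc i) = (1 + alpha) * Gamma (2 + alpha) * Gamma (real (Suc m)) / Gamma (2 + alpha + real (Suc m))
        * (real (Suc m) / (2 + alpha + real (Suc m)))"
      unfolding Suc paa_x_def Let_def alpha_def[symmetric] e2 unfolding e1 g1 g2 using gn a by (simp add: field_simps)
    also have "\<dots> = Lf (Suc m) / real k * (real (Suc m) / (2 + alpha + real (Suc m)))" by (simp only: IH)
    also have "\<dots> = Lf (Suc (Suc m)) / real k"
    proof -
      have c2: "1 + cc (Suc (Suc m)) = (3 + alpha + real m) / (1 + alpha)" using a by (simp add: cc_def field_simps)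
      have c1: "cc (Suc m) = (real m + 1) / (1 + alpha)" by (simp add: cc_def)
      have "Lf (Suc (Suc m)) = ((real m + 1) / (1 + alpha) * Lf (Suc m)) / ((3 + alpha + real m) / (1 + alpha))"
        by (simp only: Lf.simps(2)[of "Suc m"] c1 c2) simp
      also have "\<dots> = (real m + 1) * Lf (Suc m) / (3 + alpha + real m)"
      proof -
        have gen: "c \<noteq> 0 \<Longrightarrow> (x / c * y) / (b / c) = x * y / b" for x c y b :: real
          by (cases "b = 0") (simp_all add: field_simps)
        show ?thesis by (rule gen) (use a in simp)
      qed
      also have "\<dots> = Lf (Suc m) * (real (Suc m) / (2 + alpha + real (Suc m)))"
        by (simp add: algebra_simps del: Lf.simps)
      finally show ?thesis by (simp del: Lf.simps)
    qed
    finally show ?thesis using Suc by simp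
  qed
qed

lemma sum_if_diag:
  fixes f :: "nat \<Rightarrow> real"
  assumes "finite A" "w \<in> A"
  shows "(\<Sum>v\<in>A. if w = v then x else f v) = (\<Sum>v\<in>A. f v) - f w + x"
proof -
  have "(\<Sum>v\<in>A. if w = v then x else f v) = x + (\<Sum>v\<in>A - {w}. if w = v then x else f v)"
    using assms by (subst sum.remove[of _ w]) auto
  also have "(\<Sum>v\<in>A - {w}. if w = v then x else f v) = (\<Sum>v\<in>A - {w}. f v)" by (intro sum.cong) auto
  also have "(\<Sum>v\<in>A. f v) = f w + (\<Sum>v\<in>A - {w}. f v)" using assms by (subst sum.remove[of _ w]) auto
  ultimately show ?thesis by simp
qed

lemma EX_eq: "paa_EX lam k l n i = F n i" by (simp add: EX_sum F_def)

lemma EXX_eq: "paa_EXX lam k l n i j = F n i * F n j - S n i j + (if i = j then F n i else 0)"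
proof -
  have "paa_EXX lam k l n i j = (\<Sum>w<l + n * k. (\<Sum>v<l + n * k. pmf (marg n w) i * pmf (marg n v) j)
      - pmf (marg n w) i * pmf (marg n w) j + (if i = j then pmf (marg n w) i else 0))"
    unfolding EXX_sum by (intro sum.cong refl sum_if_diag) auto
  also have "\<dots> = F n i * F n j - S n i j + (if i = j then F n i else 0)"
    by (simp add: F_def S_def sum.distrib sum_subtractf sum_product)
  finally show ?thesis .
qed

definition hh :: "nat \<Rightarrow> nat \<Rightarrow> real" where
  "hh i j = ((if i = j then Lf i else 0) - sg i j) / real k"

lemma hn_eq: "paa_hn lam k l n i j = ((if i = j then F n i else 0) - S n i j) / (real n * real k)"
  by (simp add: paa_hn_def EXX_eq EX_eq)

lemma hh_sym: "hh i j = hh j i" by (auto simp: hh_def sg_sym)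

lemma hh_0: "min i j = 0 \<Longrightarrow> hh i j = 0"
  by (cases "i = 0") (auto simp: hh_def sg0 min_def split: if_splits)

lemma acc: "(1 + alpha) * cc x = real x"
  using alpha_pos by (simp add: cc_def)

lemma den_mult: "(D::real) > 0 \<Longrightarrow> X = Y / D \<Longrightarrow> X * D = Y" by simp

lemma hh_diag: "hh (Suc m) (Suc m) = (2 * real m * hh (Suc m) m + real (Suc m) * (Lf (Suc m) / real k)
    + real m * (Lf m / real k)) / (2 * real (Suc m) + 1 + alpha)"
proof -
  have a: "alpha > 0" by (rule alpha_pos)
  have kp: "real k > 0" using k_pos by simp
  define \<delta> where "\<delta> = real k * (if m = 0 then 1 else (0::real))"
  define L where "L = Lf (Suc m)"
  define L' where "L' = Lf m"
  define s where "s = sg (Suc m) (Suc m)"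
  define t where "t = sg (Suc m) m"
  have H1: "L * (1 + cc (Suc m)) = cc m * L' + \<delta>"
    unfolding L_def L'_def \<delta>_def by (rule den_mult) (use cc_pos[of m] in \<open>auto\<close>)
  have H2: "s * (1 + (cc (Suc m) + cc (Suc m))) = cc m * t + cc m * t + \<delta>"
    unfolding s_def t_def \<delta>_def
    by (rule den_mult) (use cc_pos[of m] in \<open>auto simp: sg_Suc sg_sym[of m "Suc m"]\<close>)
  have a1: "(1 + alpha) * cc (Suc m) = real m + 1" using acc[of "Suc m"] by simp
  have a0: "(1 + alpha) * cc m = real m" using acc[of m] by simp
  have key: "(L - s) * (2 * real (Suc m) + 1 + alpha) = 2 * real m * (- t) + real (Suc m) * L + real m * L'"
  proof -
    have "(L - s) * (2 * real (Suc m) + 1 + alpha) = (1 + alpha) * (L * (1 + cc (Suc m))) + L * (real m + 1)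
       - (1 + alpha) * (s * (1 + (cc (Suc m) + cc (Suc m))))"
      using a1 by (simp add: algebra_simps)
    also have "\<dots> = 2 * real m * (- t) + real (Suc m) * L + real m * L'"
      unfolding H1 H2 using a0 by (simp add: algebra_simps)
    finally show ?thesis .
  qed
  have D: "2 * real (Suc m) + 1 + alpha > 0" using a by simp
  have "2 * real m * hh (Suc m) m + real (Suc m) * (L / real k) + real m * (L' / real k)
      = (2 * real m * (- t) + real (Suc m) * L + real m * L') / real k"
    unfolding hh_def t_def using kp by (simp add: field_simps)
  also have "\<dots> = (L - s) * (2 * real (Suc m) + 1 + alpha) / real k" by (simp only: key)
  finally have E: "2 * real m * hh (Suc m) m + real (Suc m) * (L / real k) + real m * (L' / real k)
      = (L - s) * (2 * real (Suc m) + 1 + alpha) / real k" .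
  have fin: "(2 * real m * hh (Suc m) m + real (Suc m) * (L / real k) + real m * (L' / real k))
      / (2 * real (Suc m) + 1 + alpha) = (L - s) / real k"
    unfolding E using D by simp
  have hd: "hh (Suc m) (Suc m) = (L - s) / real k" unfolding hh_def L_def s_def by (simp del: Lf.simps)
  show ?thesis using fin[unfolded L_def L'_def] hd[unfolded L_def] by (simp only:)
qed

lemma hh_next: "hh (Suc m) (Suc (Suc m)) = (real m * hh m (Suc (Suc m)) + real (Suc m) * hh (Suc m) (Suc m)
    - real (Suc m) * (Lf (Suc m) / real k)) / (2 * real (Suc m) + 2 + alpha)"
proof -
  have a: "alpha > 0" by (rule alpha_pos)
  have kp: "real k > 0" using k_pos by simp
  define L where "L = Lf (Suc m)"
  define s where "s = sg (Suc m) (Suc m)"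
  define u where "u = sg (Suc m) (Suc (Suc m))"
  define v where "v = sg m (Suc (Suc m))"
  have H: "u * (1 + (cc (Suc m) + cc (Suc (Suc m)))) = cc m * v + cc (Suc m) * s"
    unfolding u_def v_def s_def
    by (rule den_mult) (use cc_pos[of m] cc_pos[of "Suc m"] in \<open>auto simp: sg_Suc\<close>)
  have a1: "(1 + alpha) * cc (Suc m) = real m + 1" using acc[of "Suc m"] by simp
  have a2: "(1 + alpha) * cc (Suc (Suc m)) = real m + 2" using acc[of "Suc (Suc m)"] by simp
  have a0: "(1 + alpha) * cc m = real m" using acc[of m] by simp
  have key: "u * (2 * real (Suc m) + 2 + alpha) = real m * v + real (Suc m) * s"
  proof -
    have "u * (2 * real (Suc m) + 2 + alpha) = (1 + alpha) * (u * (1 + (cc (Suc m) + cc (Suc (Suc m)))))"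
      using a1 a2 by (simp add: algebra_simps)
    also have "\<dots> = real m * v + real (Suc m) * s"
      unfolding H using a0 a1 by (simp add: algebra_simps)
    finally show ?thesis .
  qed
  have D: "2 * real (Suc m) + 2 + alpha > 0" using a by simp
  have "real m * hh m (Suc (Suc m)) + real (Suc m) * hh (Suc m) (Suc m) - real (Suc m) * (L / real k)
      = - (real m * v + real (Suc m) * s) / real k"
    unfolding hh_def v_def s_def L_def using kp by (simp add: field_simps del: Lf.simps)
  also have "\<dots> = - (u * (2 * real (Suc m) + 2 + alpha)) / real k" by (simp only: key)
  finally have E: "real m * hh m (Suc (Suc m)) + real (Suc m) * hh (Suc m) (Suc m) - real (Suc m) * (L / real k)
      = - (u * (2 * real (Suc m) + 2 + alpha)) / real k" .
  have fin: "(real m * hh m (Suc (Suc m)) + real (Suc m) * hh (Suc m) (Suc m) - real (Suc m) * (L / real k))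
     / (2 * real (Suc m) + 2 + alpha) = - u / real k"
    unfolding E using D by simp
  have hd: "hh (Suc m) (Suc (Suc m)) = - u / real k" unfolding hh_def u_def by simp
  show ?thesis using fin[unfolded L_def] hd by (simp only:)
qed

lemma hh_far: assumes q: "q \<ge> Suc (Suc m)"
  shows "hh (Suc m) (Suc q) = (real m * hh m (Suc q) + real q * hh (Suc m) q)
    / (real (Suc m) + real (Suc q) + 1 + alpha)"
proof -
  have a: "alpha > 0" by (rule alpha_pos)
  have kp: "real k > 0" using k_pos by simp
  define u where "u = sg (Suc m) (Suc q)"
  define v where "v = sg m (Suc q)"
  define w where "w = sg (Suc m) q"
  have H: "u * (1 + (cc (Suc m) + cc (Suc q))) = cc m * v + cc q * w"
    unfolding u_def v_def w_def
    by (rule den_mult) (use cc_pos[of m] cc_pos[of q] q in \<open>auto simp: sg_Suc\<close>)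
  have a1: "(1 + alpha) * cc (Suc m) = real m + 1" using acc[of "Suc m"] by simp
  have a2: "(1 + alpha) * cc (Suc q) = real q + 1" using acc[of "Suc q"] by simp
  have a0: "(1 + alpha) * cc m = real m" using acc[of m] by simp
  have a3: "(1 + alpha) * cc q = real q" using acc[of q] by simp
  have key: "u * (real (Suc m) + real (Suc q) + 1 + alpha) = real m * v + real q * w"
  proof -
    have "u * (real (Suc m) + real (Suc q) + 1 + alpha) = (1 + alpha) * (u * (1 + (cc (Suc m) + cc (Suc q))))"
      using a1 a2 by (simp add: algebra_simps)
    also have "\<dots> = real m * v + real q * w"
      unfolding H using a0 a3 by (simp add: algebra_simps)
    finally show ?thesis .
  qed
  have D: "real (Suc m) + real (Suc q) + 1 + alpha > 0" using a by simp
  have "real m * hh m (Suc q) + real q * hh (Suc m) q = - (real m * v + real q * w) / real k"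
    unfolding hh_def v_def w_def using kp q by (simp add: field_simps)
  also have "\<dots> = - (u * (real (Suc m) + real (Suc q) + 1 + alpha)) / real k" by (simp only: key)
  finally have E: "real m * hh m (Suc q) + real q * hh (Suc m) q
     = - (u * (real (Suc m) + real (Suc q) + 1 + alpha)) / real k" .
  have fin: "(real m * hh m (Suc q) + real q * hh (Suc m) q) / (real (Suc m) + real (Suc q) + 1 + alpha)
     = - u / real k" unfolding E using D by simp
  have hd: "hh (Suc m) (Suc q) = - u / real k" unfolding hh_def u_def using q by simp
  show ?thesis using fin hd by (simp only:)
qed
lemma xn_eq: "paa_xn lam k l n i = F n i / (real n * real k)"
  by (simp add: paa_xn_def EX_eq)

lemma kpos_real: "real k > 0" using k_pos by simp

lemma xn_O: "(\<lambda>n. paa_xn lam k l n (Suc i) - paa_x lam k (Suc i)) \<in> O(\<lambda>n. 1 / real n)"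
proof -
  have ev: "eventually (\<lambda>n. paa_xn lam k l n (Suc i) - paa_x lam k (Suc i)
     = (F n (Suc i) - Lf (Suc i) * real n) * (1 / (real n * real k))) at_top"
    using eventually_ge_at_top[of "1::nat"]
  proof eventually_elim
    case (elim n)
    then show ?case unfolding xn_eq x_eq using kpos_real by (simp add: field_simps del: Lf.simps)
  qed
  show ?thesis
    by (subst landau_o.big.in_cong[OF ev]) (rule O_mult_O1_On[OF F_lin inv_kn[OF kpos_real]])
qed

lemma xn_O1: "(\<lambda>n. paa_xn lam k l n (Suc i)) \<in> O(\<lambda>_. 1)"
proof -
  have a: "(\<lambda>n. paa_xn lam k l n (Suc i) - paa_x lam k (Suc i)) \<in> O(\<lambda>_. 1)"
    by (rule landau_o.big_trans[OF xn_O On_O1])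
  have b: "(\<lambda>n. paa_x lam k (Suc i)) \<in> O(\<lambda>_. 1)" by simp
  from sum_in_bigo(1)[OF a b] show ?thesis by simp
qed

lemma D_On: "(\<lambda>n. (if i = j then F n i else 0) - S n i j) \<in> O(\<lambda>n. real n)"
proof -
  have "(\<lambda>n. if i = j then F n i else 0) \<in> O(\<lambda>n. real n)"
    by (cases "i = j") (simp_all add: F_On)
  from sum_in_bigo(2)[OF this S_On] show ?thesis .
qed

lemma EXX_O: "(\<lambda>n. paa_EXX lam k l n (Suc i) (Suc j) / (real n * real k) ^ 2
       - paa_x lam k (Suc i) * paa_x lam k (Suc j)) \<in> O(\<lambda>n. 1 / real n)"
proof -
  let ?i = "Suc i" and ?j = "Suc j"
  have ev: "eventually (\<lambda>n. paa_EXX lam k l n ?i ?j / (real n * real k) ^ 2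
       - paa_x lam k ?i * paa_x lam k ?j
     = (paa_xn lam k l n ?i - paa_x lam k ?i) * paa_xn lam k l n ?j
       + paa_x lam k ?i * (paa_xn lam k l n ?j - paa_x lam k ?j)
       + ((if ?i = ?j then F n ?i else 0) - S n ?i ?j) * (1 / (real n * real k) ^ 2)) at_top"
    using eventually_ge_at_top[of "1::nat"]
  proof eventually_elim
    case (elim n)
    have "real n * real k \<noteq> 0" using elim kpos_real by simp
    from alg1[OF this] show ?case unfolding EXX_eq xn_eq .
  qed
  have t1: "(\<lambda>n. (paa_xn lam k l n ?i - paa_x lam k ?i) * paa_xn lam k l n ?j) \<in> O(\<lambda>n. 1 / real n)"
    by (rule O_mult_On_O1[OF xn_O xn_O1])
  have t2: "(\<lambda>n. paa_x lam k ?i * (paa_xn lam k l n ?j - paa_x lam k ?j)) \<in> O(\<lambda>n. 1 / real n)"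
    by (rule O_mult_O1_On[OF _ xn_O]) simp
  have t3: "(\<lambda>n. ((if ?i = ?j then F n ?i else 0) - S n ?i ?j) * (1 / (real n * real k) ^ 2)) \<in> O(\<lambda>n. 1 / real n)"
    using landau_o.big.mult[OF D_On inv_kn2[OF kpos_real]] by (simp only: inv_sq)
  show ?thesis
    by (subst landau_o.big.in_cong[OF ev]) (intro sum_in_bigo t1 t2 t3)
qed

lemma hn_lim: "(\<lambda>n. paa_hn lam k l n (Suc i) (Suc j)) \<longlonglongrightarrow> hh (Suc i) (Suc j)"
proof -
  let ?i = "Suc i" and ?j = "Suc j"
  have e: "paa_hn lam k l n ?i ?j = ((if ?i = ?j then F n ?i else 0) / real n - S n ?i ?j / real n) / real k" for n
    unfolding hn_eq by (simp add: diff_divide_distrib)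
  have a: "(\<lambda>n. (if ?i = ?j then F n ?i else 0) / real n) \<longlonglongrightarrow> (if ?i = ?j then Lf ?i else 0)"
    by (cases "?i = ?j") (simp_all add: lin_tendsto[OF F_lin] del: Lf.simps)
  have b: "(\<lambda>n. S n ?i ?j / real n) \<longlonglongrightarrow> sg ?i ?j" by (rule lin_tendsto[OF S_lin])
  have "(\<lambda>n. ((if ?i = ?j then F n ?i else 0) / real n - S n ?i ?j / real n) / real k)
     \<longlonglongrightarrow> ((if ?i = ?j then Lf ?i else 0) - sg ?i ?j) / real k"
    by (intro tendsto_intros a b) (use kpos_real in simp)
  then show ?thesis unfolding e hh_def .
qed

lemma small_part: "(\<lambda>n. paa_EXX lam k l n (Suc i) (Suc j) / (real n * real k) ^ 2
       - paa_xn lam k l n (Suc i) * paa_xn lam k l n (Suc j)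
       - hh (Suc i) (Suc j) / (real n * real k)) \<in> o(\<lambda>n. 1 / real n)"
proof -
  let ?i = "Suc i" and ?j = "Suc j"
  have ev: "eventually (\<lambda>n. paa_EXX lam k l n ?i ?j / (real n * real k) ^ 2
       - paa_xn lam k l n ?i * paa_xn lam k l n ?j - hh ?i ?j / (real n * real k)
     = (paa_hn lam k l n ?i ?j - hh ?i ?j) * (1 / (real n * real k))) at_top"
    using eventually_ge_at_top[of "1::nat"]
  proof eventually_elim
    case (elim n)
    have "real n * real k \<noteq> 0" using elim kpos_real by simp
    from alg2[OF this] show ?case unfolding paa_xn_def paa_hn_def .
  qed
  have "((\<lambda>n. (paa_hn lam k l n ?i ?j - hh ?i ?j) / 1) \<longlonglongrightarrow> 0)"
    using LIM_zero[OF hn_lim] by simp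
  then have sm: "(\<lambda>n. paa_hn lam k l n ?i ?j - hh ?i ?j) \<in> o(\<lambda>_. 1)"
    by (rule smalloI_tendsto) simp
  show ?thesis
    by (subst landau_o.small.in_cong[OF ev])
       (use landau_o.small_big_mult[OF sm inv_kn[OF kpos_real]] in simp)
qed


lemma main:
  "(\<forall>i j. i \<ge> 1 \<longrightarrow> j \<ge> 1 \<longrightarrow>
            (\<lambda>n. paa_xn lam k l n i - paa_x lam k i) \<in> O(\<lambda>n. 1 / real n) \<and>
            (\<lambda>n. paa_EXX lam k l n i j / (real n * real k) ^ 2
                 - paa_x lam k i * paa_x lam k j) \<in> O(\<lambda>n. 1 / real n))
       \<and> (\<exists>h :: nat \<Rightarrow> nat \<Rightarrow> real.
            (\<forall>i j. i \<ge> 1 \<longrightarrow> j \<ge> 1 \<longrightarrow> (\<lambda>n. paa_hn lam k l n i j) \<longlonglongrightarrow> h i j)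
          \<and> (\<forall>i j. i \<ge> 1 \<longrightarrow> j \<ge> 1 \<longrightarrow> h i j = h j i)
          \<and> (\<forall>i j. min i j = 0 \<longrightarrow> h i j = 0)
          \<and> (\<forall>i. i \<ge> 1 \<longrightarrow>
               h i i = (2 * real (i - 1) * h i (i - 1) + real i * paa_x lam k i
                        + real (i - 1) * paa_x lam k (i - 1)) / (2 * real i + 1 + real k / lam))
          \<and> (\<forall>i. i \<ge> 1 \<longrightarrow>
               h i (i + 1) = (real (i - 1) * h (i - 1) (i + 1) + real i * h i i
                              - real i * paa_x lam k i) / (2 * real i + 2 + real k / lam))
          \<and> (\<forall>i r. i \<ge> 1 \<longrightarrow> r \<ge> i + 2 \<longrightarrow>
               h i r = (real (i - 1) * h (i - 1) r + real (r - 1) * h i (r - 1))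
                       / (real i + real r + 1 + real k / lam))
          \<and> (\<forall>i j. i \<ge> 1 \<longrightarrow> j \<ge> 1 \<longrightarrow>
               (\<lambda>n. paa_EXX lam k l n i j / (real n * real k) ^ 2
                    - paa_xn lam k l n i * paa_xn lam k l n j
                    - h i j / (real n * real k)) \<in> o(\<lambda>n. 1 / real n)))"
proof (intro conjI allI impI)
  fix i j :: nat assume i: "i \<ge> 1" and j: "j \<ge> 1"
  then obtain i' j' where ij: "i = Suc i'" "j = Suc j'" by (metis Suc_le_D One_nat_def)
  show "(\<lambda>n. paa_xn lam k l n i - paa_x lam k i) \<in> O(\<lambda>n. 1 / real n)"
    unfolding ij by (rule xn_O)
  show "(\<lambda>n. paa_EXX lam k l n i j / (real n * real k) ^ 2
                 - paa_x lam k i * paa_x lam k j) \<in> O(\<lambda>n. 1 / real n)"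
    unfolding ij by (rule EXX_O)
next
  show "\<exists>h :: nat \<Rightarrow> nat \<Rightarrow> real.
            (\<forall>i j. i \<ge> 1 \<longrightarrow> j \<ge> 1 \<longrightarrow> (\<lambda>n. paa_hn lam k l n i j) \<longlonglongrightarrow> h i j)
          \<and> (\<forall>i j. i \<ge> 1 \<longrightarrow> j \<ge> 1 \<longrightarrow> h i j = h j i)
          \<and> (\<forall>i j. min i j = 0 \<longrightarrow> h i j = 0)
          \<and> (\<forall>i. i \<ge> 1 \<longrightarrow>
               h i i = (2 * real (i - 1) * h i (i - 1) + real i * paa_x lam k i
                        + real (i - 1) * paa_x lam k (i - 1)) / (2 * real i + 1 + real k / lam))
          \<and> (\<forall>i. i \<ge> 1 \<longrightarrow>
               h i (i + 1) = (real (i - 1) * h (i - 1) (i + 1) + real i * h i i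
                              - real i * paa_x lam k i) / (2 * real i + 2 + real k / lam))
          \<and> (\<forall>i r. i \<ge> 1 \<longrightarrow> r \<ge> i + 2 \<longrightarrow>
               h i r = (real (i - 1) * h (i - 1) r + real (r - 1) * h i (r - 1))
                       / (real i + real r + 1 + real k / lam))
          \<and> (\<forall>i j. i \<ge> 1 \<longrightarrow> j \<ge> 1 \<longrightarrow>
               (\<lambda>n. paa_EXX lam k l n i j / (real n * real k) ^ 2
                    - paa_xn lam k l n i * paa_xn lam k l n j
                    - h i j / (real n * real k)) \<in> o(\<lambda>n. 1 / real n))"
  proof (rule exI[of _ hh], intro conjI allI impI)
    fix i j :: nat assume i: "i \<ge> 1" and j: "j \<ge> 1"
    then obtain i' j' where ij: "i = Suc i'" "j = Suc j'" by (metis Suc_le_D One_nat_def)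
    show "(\<lambda>n. paa_hn lam k l n i j) \<longlonglongrightarrow> hh i j" unfolding ij by (rule hn_lim)
    show "hh i j = hh j i" by (rule hh_sym)
    show "(\<lambda>n. paa_EXX lam k l n i j / (real n * real k) ^ 2
                    - paa_xn lam k l n i * paa_xn lam k l n j
                    - hh i j / (real n * real k)) \<in> o(\<lambda>n. 1 / real n)"
      unfolding ij by (rule small_part)
  next
    fix i j :: nat assume "min i j = 0" then show "hh i j = 0" by (rule hh_0)
  next
    fix i :: nat assume i: "i \<ge> 1"
    then obtain m where m: "i = Suc m" by (metis Suc_le_D One_nat_def)
    show "hh i i = (2 * real (i - 1) * hh i (i - 1) + real i * paa_x lam k i
                        + real (i - 1) * paa_x lam k (i - 1)) / (2 * real i + 1 + real k / lam)"
      unfolding m using hh_diag[of m] by (simp add: x_eq alpha_def del: Lf.simps)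
    show "hh i (i + 1) = (real (i - 1) * hh (i - 1) (i + 1) + real i * hh i i
                              - real i * paa_x lam k i) / (2 * real i + 2 + real k / lam)"
      unfolding m using hh_next[of m] by (simp add: x_eq alpha_def del: Lf.simps)
  next
    fix i r :: nat assume i: "i \<ge> 1" and r: "r \<ge> i + 2"
    then obtain m where m: "i = Suc m" by (metis Suc_le_D One_nat_def)
    from r m obtain q where q: "r = Suc q" "q \<ge> Suc (Suc m)" by (cases r) auto
    show "hh i r = (real (i - 1) * hh (i - 1) r + real (r - 1) * hh i (r - 1))
                       / (real i + real r + 1 + real k / lam)"
      unfolding m q(1) using hh_far[OF q(2)] by (simp add: alpha_def)
  qed
qed

end

theorem lemma1:
  fixes lam :: real and k l :: nat
  assumes "lam > 0" and "k \<ge> 1" and "lam \<le> real (k + l)"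
  defines "\<alpha> \<equiv> real k / lam"
  shows "(\<forall>i j. i \<ge> 1 \<longrightarrow> j \<ge> 1 \<longrightarrow>
            (\<lambda>n. paa_xn lam k l n i - paa_x lam k i) \<in> O(\<lambda>n. 1 / real n) \<and>
            (\<lambda>n. paa_EXX lam k l n i j / (real n * real k) ^ 2
                 - paa_x lam k i * paa_x lam k j) \<in> O(\<lambda>n. 1 / real n))
       \<and> (\<exists>h :: nat \<Rightarrow> nat \<Rightarrow> real.
            (\<forall>i j. i \<ge> 1 \<longrightarrow> j \<ge> 1 \<longrightarrow> (\<lambda>n. paa_hn lam k l n i j) \<longlonglongrightarrow> h i j)
          \<and> (\<forall>i j. i \<ge> 1 \<longrightarrow> j \<ge> 1 \<longrightarrow> h i j = h j i)
          \<and> (\<forall>i j. min i j = 0 \<longrightarrow> h i j = 0)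
          \<and> (\<forall>i. i \<ge> 1 \<longrightarrow>
               h i i = (2 * real (i - 1) * h i (i - 1) + real i * paa_x lam k i
                        + real (i - 1) * paa_x lam k (i - 1)) / (2 * real i + 1 + \<alpha>))
          \<and> (\<forall>i. i \<ge> 1 \<longrightarrow>
               h i (i + 1) = (real (i - 1) * h (i - 1) (i + 1) + real i * h i i
                              - real i * paa_x lam k i) / (2 * real i + 2 + \<alpha>))
          \<and> (\<forall>i r. i \<ge> 1 \<longrightarrow> r \<ge> i + 2 \<longrightarrow>
               h i r = (real (i - 1) * h (i - 1) r + real (r - 1) * h i (r - 1))
                       / (real i + real r + 1 + \<alpha>))
          \<and> (\<forall>i j. i \<ge> 1 \<longrightarrow> j \<ge> 1 \<longrightarrow>
               (\<lambda>n. paa_EXX lam k l n i j / (real n * real k) ^ 2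
                    - paa_xn lam k l n i * paa_xn lam k l n j
                    - h i j / (real n * real k)) \<in> o(\<lambda>n. 1 / real n)))"
  unfolding \<alpha>_def by (rule main[OF assms(1) assms(2)])

end
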